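(* Consider the sparse support recovery problem described in the context, with $P_0\neq P_1$ and $D_{\mathrm{KL}}=\max\{D(P_0\|P_1),D(P_1\|P_0)\}\in(0,\infty)$. Let $\delta>0$. Any uniform coordinate-wise (sequential) sampling and estimation procedure whose expected number of samples satisfies $\mathbb{E}[\sum_{i,j}\Gamma_{i,j}]\le nm$ with $$m \le \frac{\log s + \log\left(\frac{1}{4\delta}\right)}{D_{\mathrm{KL}}}$$ has family-wise error rate $\mathbb{P}_e=\mathbb{P}(\hat{\mathcal S}\neq\mathcal S)\ge 1-e^{-\delta}$.
   Context: Setting: $n\ge 2$ is the dimension and $\mathcal S\subset\{1,\dots,n\}$ is an unknown support set with $|\mathcal S|=s$, where $1\le s\le n/2$. $P_0,P_1$ are probability densities (or mass functions) on a common space $\mathcal Y$ with common support, w.r.t. a common dominating measure. For each $i$, we can observe i.i.d. samples $Y_{i,1},Y_{i,2},\dots$ with $Y_{i,j}\sim P_0$ if $i\notin\mathcal S$ and $Y_{i,j}\sim P_1$ if $i\in\mathcal S$; all samples are independent across $i$ and $j$. $D(P\|Q)=\mathbb{E}_P[\log(P(Y)/Q(Y))]$ is the Kullback–Leibler divergence. A sampling procedure is a collection of functions $\Gamma_{i,j}$, $i\in\{1,\dots,n\}$, $j\in\mathbb N$, with $\Gamma_{i,j}$ a $\{0,1\}$-valued function of $(Y_{i,1},\dots,Y_{i,j-1})$; $Y_{i,j}$ is observed iff $\Gamma_{i,j}=1$. A procedure is uniform coordinate-wise if $\Gamma_{i,j}$ is the same function for every $i$, and the decision whether $i\in\hat{\mathcal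 S}$ is made by the same rule for every $i$ using only the observed samples of coordinate $i$. The estimate $\hat{\mathcal S}$ is formed from the observed samples; $\mathbb{P}_e=\mathbb{P}(\hat{\mathcal S}\ne\mathcal S)$. The budget parameter $m\ge0$ means $\mathbb{E}[\sum_{i,j}\Gamma_{i,j}]\le nm$ (on average at most $m$ samples per coordinate). *)

theory Defs
  imports "HOL-Probability.Probability"
begin

text \<open>A uniform coordinate-wise sequential sampling rule is a single function
  Gam on observation records: given the record of the first j-1 sample slots of a
  coordinate (Some y if the slot was observed with value y, None otherwise),
  Gam decides whether the j-th sample is observed. Indices are 0-based:
  slot j = sample Y_{i,j+1}.\<close>

fun obs_prefix :: "('y option list \<Rightarrow> bool) \<Rightarrow> (nat \<Rightarrow> 'y) \<Rightarrow> nat \<Rightarrow> 'y option list" where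
  "obs_prefix Gam w 0 = []"
| "obs_prefix Gam w (Suc j) =
     obs_prefix Gam w j @ [if Gam (obs_prefix Gam w j) then Some (w j) else None]"

definition sampled :: "('y option list \<Rightarrow> bool) \<Rightarrow> (nat \<Rightarrow> 'y) \<Rightarrow> nat \<Rightarrow> bool" where
  "sampled Gam w j = Gam (obs_prefix Gam w j)"

definition observed :: "('y option list \<Rightarrow> bool) \<Rightarrow> (nat \<Rightarrow> 'y) \<Rightarrow> nat \<Rightarrow> 'y option" where
  "observed Gam w j = (if sampled Gam w j then Some (w j) else None)"

definition num_samples :: "('y option list \<Rightarrow> bool) \<Rightarrow> (nat \<Rightarrow> 'y) \<Rightarrow> ennreal" where
  "num_samples Gam w = (\<Sum>j. if sampled Gam w j then 1 else 0)"

definition KL_dens :: "'y measure \<Rightarrow> ('y \<Rightarrow> real) \<Rightarrow> ('y \<Rightarrow> real) \<Rightarrow> real" where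
  "KL_dens mu p q = (\<integral>y. ln (p y / q y) \<partial>(density mu p))"

definition sample_space ::
  "nat \<Rightarrow> nat set \<Rightarrow> 'y measure \<Rightarrow> 'y measure \<Rightarrow> (nat \<Rightarrow> nat \<Rightarrow> 'y) measure" where
  "sample_space n S P0 P1 =
     PiM {1..n} (\<lambda>i. PiM (UNIV :: nat set) (\<lambda>_. if i \<in> S then P1 else P0))"

definition est_support ::
  "nat \<Rightarrow> ('y option list \<Rightarrow> bool) \<Rightarrow> ((nat \<Rightarrow> 'y option) \<Rightarrow> bool) \<Rightarrow> (nat \<Rightarrow> nat \<Rightarrow> 'y) \<Rightarrow> nat set" where
  "est_support n Gam dec w = {i \<in> {1..n}. dec (observed Gam (w i))}"

end

theory Submission
  imports Defs "HOL-Analysis.Harmonic_Numbers"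
begin


lemma obs_prefix_shift:
  "obs_prefix Gam (case_nat y \<omega>) (Suc T) =
     (if Gam [] then Some y else None) # obs_prefix (\<lambda>p. Gam ((if Gam [] then Some y else None) # p)) \<omega> T"
  by (induction T) auto

lemma sampled_shift:
  "sampled Gam (case_nat y \<omega>) (Suc j) = sampled (\<lambda>p. Gam ((if Gam [] then Some y else None) # p)) \<omega> j"
  unfolding sampled_def by (simp only: obs_prefix_shift)

lemma sampled_0: "sampled Gam w 0 = Gam []"
  by (simp add: sampled_def)


lemma (in sequence_space) iter_nn:
  assumes F: "F \<in> borel_measurable S"
  shows "(\<integral>\<^sup>+w. F w \<partial>S) = (\<integral>\<^sup>+y. \<integral>\<^sup>+\<omega>. F (case_nat y \<omega>) \<partial>S \<partial>M)"
proof -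
  have m: "(\<lambda>(s, \<omega>). case_nat s \<omega>) \<in> measurable (M \<Otimes>\<^sub>M S) S" by measurable
  have "(\<integral>\<^sup>+w. F w \<partial>S) = (\<integral>\<^sup>+w. F w \<partial>distr (M \<Otimes>\<^sub>M S) S (\<lambda>(s, \<omega>). case_nat s \<omega>))"
    by (simp add: PiM_iter)
  also have "\<dots> = (\<integral>\<^sup>+x. F (case_prod case_nat x) \<partial>(M \<Otimes>\<^sub>M S))"
    using F m by (subst nn_integral_distr) auto
  also have "\<dots> = (\<integral>\<^sup>+y. \<integral>\<^sup>+\<omega>. F (case_nat y \<omega>) \<partial>S \<partial>M)"
    using F m by (subst P.nn_integral_fst[symmetric]) (auto intro: measurable_compose)
  finally show ?thesis .
qed

lemma (in sequence_space) cn_space: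
  "y \<in> space M \<Longrightarrow> \<omega> \<in> space S \<Longrightarrow> case_nat y \<omega> \<in> space S"
  by (auto simp: space_PiM PiE_iff split: nat.split)

lemma (in sequence_space) pred_shift:
  assumes "\<forall>j. (\<lambda>w. sampled Gam w j) \<in> measurable S (count_space UNIV)" "y \<in> space M"
  shows "\<forall>j. (\<lambda>w. sampled (\<lambda>p. Gam ((if Gam [] then Some y else None) # p)) w j) \<in> measurable S (count_space UNIV)"
proof
  fix j
  have "(\<lambda>w. case_nat y w) \<in> measurable S S"
    using assms(2) by measurable
  hence "(\<lambda>w. sampled Gam (case_nat y w) (Suc j)) \<in> measurable S (count_space UNIV)"
    using measurable_compose[OF _ assms(1)[rule_format, of "Suc j"], of "\<lambda>w. case_nat y w"] by simp
  thus "(\<lambda>w. sampled (\<lambda>p. Gam ((if Gam [] then Some y else None) # p)) w j) \<in> measurable S (count_space UNIV)"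
    by (simp add: sampled_shift)
qed

lemma (in sequence_space) fst_meas:
  assumes F: "F \<in> borel_measurable S"
  shows "(\<lambda>y. \<integral>\<^sup>+\<omega>. F (case_nat y \<omega>) \<partial>S) \<in> borel_measurable M"
proof -
  have m: "(\<lambda>(s, \<omega>). case_nat s \<omega>) \<in> measurable (M \<Otimes>\<^sub>M S) S" by measurable
  have "(\<lambda>x. F (case_prod case_nat x)) \<in> borel_measurable (M \<Otimes>\<^sub>M S)"
    using measurable_compose[OF m F] by simp
  from P.borel_measurable_nn_integral_fst[OF this] show ?thesis by simp
qed

lemma (in sequence_space) emeasure_sampled_Suc_pt:
  assumes "\<forall>j. (\<lambda>w. sampled Gam w j) \<in> measurable S (count_space UNIV)" "y \<in> space M"
  shows "emeasure S {\<omega>\<in>space S. sampled (\<lambda>p. Gam ((if Gam [] then Some y else None) # p)) \<omega> j}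
     = (\<integral>\<^sup>+\<omega>. indicator {w\<in>space S. sampled Gam w (Suc j)} (case_nat y \<omega>) \<partial>S)"
proof -
  have "(\<lambda>\<omega>. sampled (\<lambda>p. Gam ((if Gam [] then Some y else None) # p)) \<omega> j) \<in> measurable S (count_space UNIV)"
    using pred_shift[OF assms] by blast
  hence "{\<omega>\<in>space S. sampled (\<lambda>p. Gam ((if Gam [] then Some y else None) # p)) \<omega> j} \<in> sets S"
    by measurable
  hence "emeasure S {\<omega>\<in>space S. sampled (\<lambda>p. Gam ((if Gam [] then Some y else None) # p)) \<omega> j}
     = (\<integral>\<^sup>+\<omega>. indicator {\<omega>\<in>space S. sampled (\<lambda>p. Gam ((if Gam [] then Some y else None) # p)) \<omega> j} \<omega> \<partial>S)"
    by simp
  also have "\<dots> = (\<integral>\<^sup>+\<omega>. indicator {w\<in>space S. sampled Gam w (Suc j)} (case_nat y \<omega>) \<partial>S)"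
    using assms(2) by (intro nn_integral_cong) (auto simp: indicator_def sampled_shift cn_space)
  finally show ?thesis .
qed

lemma (in sequence_space) emeasure_sampled_Suc:
  assumes "\<forall>j. (\<lambda>w. sampled Gam w j) \<in> measurable S (count_space UNIV)"
  shows "emeasure S {w\<in>space S. sampled Gam w (Suc j)} =
    (\<integral>\<^sup>+y. \<integral>\<^sup>+\<omega>. indicator {w\<in>space S. sampled Gam w (Suc j)} (case_nat y \<omega>) \<partial>S \<partial>M)"
proof -
  have "(\<lambda>w. sampled Gam w (Suc j)) \<in> measurable S (count_space UNIV)" using assms by blast
  hence ms: "{w\<in>space S. sampled Gam w (Suc j)} \<in> sets S" by measurable
  have "emeasure S {w\<in>space S. sampled Gam w (Suc j)} = (\<integral>\<^sup>+w. indicator {w\<in>space S. sampled Gam w (Suc j)} w \<partial>S)"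
    using ms by simp
  also have "\<dots> = (\<integral>\<^sup>+y. \<integral>\<^sup>+\<omega>. indicator {w\<in>space S. sampled Gam w (Suc j)} (case_nat y \<omega>) \<partial>S \<partial>M)"
    using ms by (intro iter_nn) auto
  finally show ?thesis .
qed

lemma (in sequence_space) wald_nn:
  assumes "\<forall>j. (\<lambda>w. sampled Gam w j) \<in> measurable S (count_space UNIV)" and phi: "\<phi> \<in> borel_measurable M"
  shows "(\<integral>\<^sup>+w. (if sampled Gam w j then \<phi> (w j) else 0) \<partial>S)
       = emeasure S {w\<in>space S. sampled Gam w j} * (\<integral>\<^sup>+y. \<phi> y \<partial>M)"
  using assms(1)
proof (induction j arbitrary: Gam)
  case 0
  show ?case
  proof (cases "Gam []")
    case True
    have "(\<integral>\<^sup>+w. (if sampled Gam w 0 then \<phi> (w 0) else 0) \<partial>S) = (\<integral>\<^sup>+w. \<phi> (w 0) \<partial>S)"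
      using True by (simp add: sampled_0)
    also have "\<dots> = (\<integral>\<^sup>+y. \<phi> y \<partial>distr S M (\<lambda>w. w 0))"
      using phi by (subst nn_integral_distr) auto
    also have "\<dots> = (\<integral>\<^sup>+y. \<phi> y \<partial>M)"
      by (simp add: PiM_component)
    finally show ?thesis using True by (simp add: sampled_0 P.emeasure_space_1)
  next
    case False
    thus ?thesis by (simp add: sampled_0)
  qed
next
  case (Suc j)
  have m: "(\<lambda>w. if sampled Gam w (Suc j) then \<phi> (w (Suc j)) else 0) \<in> borel_measurable S"
    using Suc.prems[rule_format, of "Suc j"] phi by measurable
  have "(\<integral>\<^sup>+w. (if sampled Gam w (Suc j) then \<phi> (w (Suc j)) else 0) \<partial>S)
     = (\<integral>\<^sup>+y. \<integral>\<^sup>+\<omega>. (if sampled Gam (case_nat y \<omega>) (Suc j) then \<phi> (case_nat y \<omega> (Suc j)) else 0) \<partial>S \<partial>M)"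
    using m by (rule iter_nn)
  also have "\<dots> = (\<integral>\<^sup>+y. emeasure S {\<omega>\<in>space S. sampled (\<lambda>p. Gam ((if Gam [] then Some y else None) # p)) \<omega> j} * (\<integral>\<^sup>+y. \<phi> y \<partial>M) \<partial>M)"
  proof (intro nn_integral_cong)
    fix y assume y: "y \<in> space M"
    show "(\<integral>\<^sup>+\<omega>. (if sampled Gam (case_nat y \<omega>) (Suc j) then \<phi> (case_nat y \<omega> (Suc j)) else 0) \<partial>S)
      = emeasure S {\<omega>\<in>space S. sampled (\<lambda>p. Gam ((if Gam [] then Some y else None) # p)) \<omega> j} * (\<integral>\<^sup>+y. \<phi> y \<partial>M)"
      unfolding sampled_shift nat.case(2) by (rule Suc.IH[OF pred_shift[OF Suc.prems y]])
  qed
  also have "\<dots> = (\<integral>\<^sup>+y. (\<integral>\<^sup>+\<omega>. indicator {w\<in>space S. sampled Gam w (Suc j)} (case_nat y \<omega>) \<partial>S) * (\<integral>\<^sup>+y. \<phi> y \<partial>M) \<partial>M)"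
    by (intro nn_integral_cong) (simp add: emeasure_sampled_Suc_pt[OF Suc.prems])
  also have "\<dots> = (\<integral>\<^sup>+y. (\<integral>\<^sup>+\<omega>. indicator {w\<in>space S. sampled Gam w (Suc j)} (case_nat y \<omega>) \<partial>S) \<partial>M) * (\<integral>\<^sup>+y. \<phi> y \<partial>M)"
  proof (rule nn_integral_multc)
    have "(\<lambda>w. sampled Gam w (Suc j)) \<in> measurable S (count_space UNIV)" using Suc.prems by blast
    hence "{w\<in>space S. sampled Gam w (Suc j)} \<in> sets S" by measurable
    thus "(\<lambda>y. \<integral>\<^sup>+\<omega>. indicator {w\<in>space S. sampled Gam w (Suc j)} (case_nat y \<omega>) \<partial>S) \<in> borel_measurable M"
      by (intro fst_meas) simp
  qed
  also have "\<dots> = emeasure S {w\<in>space S. sampled Gam w (Suc j)} * (\<integral>\<^sup>+y. \<phi> y \<partial>M)"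
    using emeasure_sampled_Suc[OF Suc.prems] by simp
  finally show ?case .
qed



definition llr :: "('y \<Rightarrow> real) \<Rightarrow> ('y option list \<Rightarrow> bool) \<Rightarrow> nat \<Rightarrow> (nat \<Rightarrow> 'y) \<Rightarrow> real" where
  "llr L Gam T w = (\<Sum>j<T. if sampled Gam w j then L (w j) else 0)"

lemma llr_shift:
  "llr L Gam (Suc T) (case_nat y \<omega>) =
     (if Gam [] then L y else 0) + llr L (\<lambda>p. Gam ((if Gam [] then Some y else None) # p)) T \<omega>"
  unfolding llr_def sum.lessThan_Suc_shift sampled_0 sampled_shift nat.case by simp

lemma llr_0[simp]: "llr L Gam 0 w = 0" by (simp add: llr_def)

lemma seq_space: "prob_space P \<Longrightarrow> sequence_space P"
  by (simp add: sequence_space_def product_prob_space_def product_prob_space_axioms_def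
      product_sigma_finite_def prob_space_imp_sigma_finite)

lemma llr_meas:
  assumes "\<forall>j. (\<lambda>w. sampled Gam w j) \<in> measurable (PiM UNIV (\<lambda>_. P)) (count_space UNIV)"
    "L \<in> borel_measurable P"
  shows "llr L Gam T \<in> borel_measurable (PiM UNIV (\<lambda>_. P))"
proof -
  have "(\<lambda>w. if sampled Gam w j then L (w j) else 0) \<in> borel_measurable (PiM UNIV (\<lambda>_. P))" for j
  proof -
    have "(\<lambda>w. sampled Gam w j) \<in> measurable (PiM UNIV (\<lambda>_. P)) (count_space UNIV)" using assms by blast
    thus ?thesis using assms(2) by measurable
  qed
  thus ?thesis unfolding llr_def by (intro borel_measurable_sum) (auto simp: fun_eq_iff)
qed


lemma ac3: "(a::ennreal) * (x * b) = x * (a * b)"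
  by (simp add: ac_simps)

lemma change_of_measure:
  assumes P: "prob_space P" and Q: "prob_space Q" and sQ: "sets Q = sets P"
    and L: "L \<in> borel_measurable P"
    and chg: "\<And>h. h \<in> borel_measurable P \<Longrightarrow> (\<integral>\<^sup>+y. h y \<partial>Q) = (\<integral>\<^sup>+y. ennreal (exp (- L y)) * h y \<partial>P)"
  shows "\<forall>j. (\<lambda>w. sampled Gam w j) \<in> measurable (PiM UNIV (\<lambda>_. P)) (count_space UNIV) \<Longrightarrow>
    G \<in> borel_measurable (PiM UNIV (\<lambda>_. P)) \<Longrightarrow>
    (\<forall>w w'. obs_prefix Gam w T = obs_prefix Gam w' T \<longrightarrow> G w = G w') \<Longrightarrow>
    (\<integral>\<^sup>+w. G w \<partial>PiM UNIV (\<lambda>_. Q)) = (\<integral>\<^sup>+w. G w * ennreal (exp (- llr L Gam T w)) \<partial>PiM UNIV (\<lambda>_. P))"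
proof (induction T arbitrary: Gam G)
  interpret SP: sequence_space P by (rule seq_space[OF P])
  interpret SQ: sequence_space Q by (rule seq_space[OF Q])
  have sS: "sets (PiM UNIV (\<lambda>_. Q)) = sets (PiM UNIV (\<lambda>_. P))"
    by (rule sets_PiM_cong) (auto simp: sQ)
  have spS: "space (PiM UNIV (\<lambda>_. Q)) = space (PiM UNIV (\<lambda>_. P))"
    using sets_eq_imp_space_eq[OF sS] .
  case 0
  obtain w0 where w0: "w0 \<in> space (PiM (UNIV::nat set) (\<lambda>_. P))"
    using SP.P.not_empty by blast
  define g0 where "g0 = G w0"
  have Geq: "G = (\<lambda>_. g0)" using "0.prems"(3) by (auto simp: g0_def fun_eq_iff)
  show ?case unfolding Geq by (simp add: SQ.P.emeasure_space_1 SP.P.emeasure_space_1)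
next
  interpret SP: sequence_space P by (rule seq_space[OF P])
  interpret SQ: sequence_space Q by (rule seq_space[OF Q])
  have sS: "sets (PiM UNIV (\<lambda>_. Q)) = sets (PiM UNIV (\<lambda>_. P))"
    by (rule sets_PiM_cong) (auto simp: sQ)
  have spS: "space (PiM UNIV (\<lambda>_. Q)) = space (PiM UNIV (\<lambda>_. P))"
    using sets_eq_imp_space_eq[OF sS] .
  have spQ: "space Q = space P" using sets_eq_imp_space_eq[OF sQ] .
  case (Suc T)
  note samp = Suc.prems(1) and Gm = Suc.prems(2) and dep = Suc.prems(3)
  define Gy where "Gy y = (\<lambda>p. Gam ((if Gam [] then Some y else None) # p))" for y
  define c where "c y = (if Gam [] then L y else 0)" for y
  define F where "F w = G w * ennreal (exp (- llr L Gam (Suc T) w))" for w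
  have GmQ: "G \<in> borel_measurable (PiM UNIV (\<lambda>_. Q))"
    using Gm measurable_cong_sets[OF sS refl] by blast
  have Fm: "F \<in> borel_measurable (PiM UNIV (\<lambda>_. P))"
    unfolding F_def using Gm llr_meas[OF samp L] by measurable
  have cnP: "(\<lambda>\<omega>. case_nat y \<omega>) \<in> measurable (PiM UNIV (\<lambda>_. P)) (PiM UNIV (\<lambda>_. P))"
    if "y \<in> space P" for y using that by measurable
  have llr_s: "llr L Gam (Suc T) (case_nat y \<omega>) = c y + llr L (Gy y) T \<omega>" for y \<omega>
    unfolding c_def Gy_def by (rule llr_shift)
  have dep_s: "G (case_nat y \<omega>) = G (case_nat y \<omega>')"
    if "obs_prefix (Gy y) \<omega> T = obs_prefix (Gy y) \<omega>' T" for y \<omega> \<omega>'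
    using dep that unfolding Gy_def by (metis obs_prefix_shift)
  have "(\<integral>\<^sup>+w. G w \<partial>PiM UNIV (\<lambda>_. Q)) = (\<integral>\<^sup>+y. \<integral>\<^sup>+\<omega>. G (case_nat y \<omega>) \<partial>PiM UNIV (\<lambda>_. Q) \<partial>Q)"
    using GmQ by (rule SQ.iter_nn)
  also have "\<dots> = (\<integral>\<^sup>+y. \<integral>\<^sup>+\<omega>. G (case_nat y \<omega>) * ennreal (exp (- llr L (Gy y) T \<omega>)) \<partial>PiM UNIV (\<lambda>_. P) \<partial>Q)"
  proof (intro nn_integral_cong)
    fix y assume "y \<in> space Q"
    hence y: "y \<in> space P" using spQ by simp
    have s1: "\<forall>j. (\<lambda>w. sampled (Gy y) w j) \<in> measurable (PiM UNIV (\<lambda>_. P)) (count_space UNIV)"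
      unfolding Gy_def using SP.pred_shift[OF samp y] .
    have g1: "(\<lambda>\<omega>. G (case_nat y \<omega>)) \<in> borel_measurable (PiM UNIV (\<lambda>_. P))"
      using measurable_compose[OF cnP[OF y] Gm] .
    show "(\<integral>\<^sup>+\<omega>. G (case_nat y \<omega>) \<partial>PiM UNIV (\<lambda>_. Q)) =
          (\<integral>\<^sup>+\<omega>. G (case_nat y \<omega>) * ennreal (exp (- llr L (Gy y) T \<omega>)) \<partial>PiM UNIV (\<lambda>_. P))"
      using Suc.IH[OF s1 g1] dep_s by blast
  qed
  also have "\<dots> = (\<integral>\<^sup>+y. (\<integral>\<^sup>+\<omega>. F (case_nat y \<omega>) \<partial>PiM UNIV (\<lambda>_. P)) * ennreal (exp (c y)) \<partial>Q)"
  proof (intro nn_integral_cong)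
    fix y assume "y \<in> space Q"
    hence y: "y \<in> space P" using spQ by simp
    have "(\<integral>\<^sup>+\<omega>. G (case_nat y \<omega>) * ennreal (exp (- llr L (Gy y) T \<omega>)) \<partial>PiM UNIV (\<lambda>_. P))
        = (\<integral>\<^sup>+\<omega>. F (case_nat y \<omega>) * ennreal (exp (c y)) \<partial>PiM UNIV (\<lambda>_. P))"
      by (intro nn_integral_cong) (simp add: F_def llr_s mult.assoc ennreal_mult'[symmetric] exp_add[symmetric])
    also have "\<dots> = (\<integral>\<^sup>+\<omega>. F (case_nat y \<omega>) \<partial>PiM UNIV (\<lambda>_. P)) * ennreal (exp (c y))"
      by (rule nn_integral_multc) (rule measurable_compose[OF cnP[OF y] Fm])
    finally show "(\<integral>\<^sup>+\<omega>. G (case_nat y \<omega>) * ennreal (exp (- llr L (Gy y) T \<omega>)) \<partial>PiM UNIV (\<lambda>_. P))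
        = (\<integral>\<^sup>+\<omega>. F (case_nat y \<omega>) \<partial>PiM UNIV (\<lambda>_. P)) * ennreal (exp (c y))" .
  qed
  also have "\<dots> = (\<integral>\<^sup>+y. (\<integral>\<^sup>+\<omega>. F (case_nat y \<omega>) \<partial>PiM UNIV (\<lambda>_. P)) \<partial>P)"
  proof (cases "Gam []")
    case True
    have K: "(\<lambda>y. (\<integral>\<^sup>+\<omega>. F (case_nat y \<omega>) \<partial>PiM UNIV (\<lambda>_. P)) * ennreal (exp (c y))) \<in> borel_measurable P"
      using SP.fst_meas[OF Fm] L by (simp add: c_def True)
    have "(\<integral>\<^sup>+y. (\<integral>\<^sup>+\<omega>. F (case_nat y \<omega>) \<partial>PiM UNIV (\<lambda>_. P)) * ennreal (exp (c y)) \<partial>Q)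
       = (\<integral>\<^sup>+y. ennreal (exp (- L y)) * ((\<integral>\<^sup>+\<omega>. F (case_nat y \<omega>) \<partial>PiM UNIV (\<lambda>_. P)) * ennreal (exp (c y))) \<partial>P)"
      by (rule chg[OF K])
    also have "\<dots> = (\<integral>\<^sup>+y. (\<integral>\<^sup>+\<omega>. F (case_nat y \<omega>) \<partial>PiM UNIV (\<lambda>_. P)) \<partial>P)"
    proof (intro nn_integral_cong)
      fix y
      have e: "ennreal (exp (- L y)) * ennreal (exp (L y)) = 1"
        by (subst ennreal_mult[symmetric]) (simp_all add: exp_add[symmetric])
      show "ennreal (exp (- L y)) * ((\<integral>\<^sup>+\<omega>. F (case_nat y \<omega>) \<partial>PiM UNIV (\<lambda>_. P)) * ennreal (exp (c y)))
          = (\<integral>\<^sup>+\<omega>. F (case_nat y \<omega>) \<partial>PiM UNIV (\<lambda>_. P))"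
      proof -
        have "ennreal (exp (- L y)) * ((\<integral>\<^sup>+\<omega>. F (case_nat y \<omega>) \<partial>PiM UNIV (\<lambda>_. P)) * ennreal (exp (c y)))
          = (\<integral>\<^sup>+\<omega>. F (case_nat y \<omega>) \<partial>PiM UNIV (\<lambda>_. P)) * (ennreal (exp (- L y)) * ennreal (exp (L y)))"
          unfolding c_def if_P[OF True] by (rule ac3)
        also have "\<dots> = (\<integral>\<^sup>+\<omega>. F (case_nat y \<omega>) \<partial>PiM UNIV (\<lambda>_. P))" by (simp only: e mult_1_right)
        finally show ?thesis .
      qed
    qed
    finally show ?thesis .
  next
    case False
    obtain y0 where y0: "y0 \<in> space P" using SP.M.not_empty by blast
    have const: "(\<integral>\<^sup>+\<omega>. F (case_nat y \<omega>) \<partial>PiM UNIV (\<lambda>_. P)) = (\<integral>\<^sup>+\<omega>. F (case_nat y0 \<omega>) \<partial>PiM UNIV (\<lambda>_. P))" for y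
    proof -
      have "F (case_nat y \<omega>) = F (case_nat y0 \<omega>)" for \<omega>
      proof -
        have "obs_prefix Gam (case_nat y \<omega>) (Suc T) = obs_prefix Gam (case_nat y0 \<omega>) (Suc T)"
          by (simp only: obs_prefix_shift if_not_P[OF False])
        hence "G (case_nat y \<omega>) = G (case_nat y0 \<omega>)"
          using dep by blast
        moreover have "llr L Gam (Suc T) (case_nat y \<omega>) = llr L Gam (Suc T) (case_nat y0 \<omega>)"
          by (simp add: llr_shift False)
        ultimately show ?thesis by (simp add: F_def)
      qed
      thus ?thesis by simp
    qed
    define K0 where "K0 = (\<integral>\<^sup>+\<omega>. F (case_nat y0 \<omega>) \<partial>PiM UNIV (\<lambda>_. P))"
    have "(\<integral>\<^sup>+y. (\<integral>\<^sup>+\<omega>. F (case_nat y \<omega>) \<partial>PiM UNIV (\<lambda>_. P)) * ennreal (exp (c y)) \<partial>Q)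
        = (\<integral>\<^sup>+y. K0 \<partial>Q)"
    proof (intro nn_integral_cong)
      fix y
      show "(\<integral>\<^sup>+\<omega>. F (case_nat y \<omega>) \<partial>PiM UNIV (\<lambda>_. P)) * ennreal (exp (c y)) = K0"
        unfolding K0_def c_def if_not_P[OF False] exp_zero ennreal_1 mult_1_right by (rule const)
    qed
    also have "\<dots> = K0" by (simp add: SQ.M.emeasure_space_1)
    also have "\<dots> = (\<integral>\<^sup>+y. K0 \<partial>P)" by (simp add: SP.M.emeasure_space_1)
    also have "\<dots> = (\<integral>\<^sup>+y. (\<integral>\<^sup>+\<omega>. F (case_nat y \<omega>) \<partial>PiM UNIV (\<lambda>_. P)) \<partial>P)"
      unfolding K0_def by (rule nn_integral_cong) (rule const[symmetric])
    finally show ?thesis .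
  qed
  also have "\<dots> = (\<integral>\<^sup>+w. F w \<partial>PiM UNIV (\<lambda>_. P))"
    using Fm by (rule SP.iter_nn[symmetric])
  finally show ?case by (simp add: F_def)
qed



lemma obs_prefix_length[simp]: "length (obs_prefix Gam w T) = T"
  by (induction T) auto

lemma obs_prefix_take: "j \<le> T \<Longrightarrow> take j (obs_prefix Gam w T) = obs_prefix Gam w j"
proof (induction T)
  case 0 thus ?case by simp
next
  case (Suc T)
  show ?case
  proof (cases "j = Suc T")
    case True thus ?thesis by simp
  next
    case False
    hence "j \<le> T" using Suc.prems by simp
    thus ?thesis using Suc.IH by simp
  qed
qed

lemma observed_nth: "observed Gam w j = obs_prefix Gam w (Suc j) ! j"
  by (simp add: observed_def sampled_def nth_append)

lemma obs_prefix_eq_le: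
  "obs_prefix Gam w T = obs_prefix Gam w' T \<Longrightarrow> j \<le> T \<Longrightarrow> obs_prefix Gam w j = obs_prefix Gam w' j"
  by (metis obs_prefix_take)

lemma obs_prefix_eq_ge:
  assumes eq: "obs_prefix Gam w T = obs_prefix Gam w' T" and ns: "\<forall>j\<ge>T. \<not> sampled Gam w j"
  shows "j \<ge> T \<Longrightarrow> obs_prefix Gam w j = obs_prefix Gam w' j"
proof (induction j rule: dec_induct)
  case base thus ?case using eq .
next
  case (step j)
  have "\<not> sampled Gam w j" using ns step.hyps by simp
  hence "\<not> sampled Gam w' j" using step.IH by (simp add: sampled_def)
  thus ?case using step.IH \<open>\<not> sampled Gam w j\<close> by (simp add: sampled_def)
qed

lemma prefix_determines:
  assumes eq: "obs_prefix Gam w T = obs_prefix Gam w' T" and ns: "\<forall>j\<ge>T. \<not> sampled Gam w j"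
  shows "(\<forall>j\<ge>T. \<not> sampled Gam w' j) \<and> observed Gam w' = observed Gam w"
proof
  show "\<forall>j\<ge>T. \<not> sampled Gam w' j"
    using obs_prefix_eq_ge[OF eq ns] ns by (simp add: sampled_def)
  show "observed Gam w' = observed Gam w"
  proof
    fix j
    show "observed Gam w' j = observed Gam w j"
    proof (cases "Suc j \<le> T")
      case True
      thus ?thesis using obs_prefix_eq_le[OF eq True] by (auto simp: observed_def sampled_def)
    next
      case False
      hence "j \<ge> T" by simp
      thus ?thesis using obs_prefix_eq_ge[OF eq ns] ns by (simp add: observed_def sampled_def)
    qed
  qed
qed

lemma (in sequence_space) wald_real_nonneg:
  assumes samp: "\<forall>j. (\<lambda>w. sampled Gam w j) \<in> measurable S (count_space UNIV)"
    and phi: "\<phi> \<in> borel_measurable M" "\<And>y. 0 \<le> \<phi> y" "integrable M \<phi>"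
  shows "integrable S (\<lambda>w. if sampled Gam w j then \<phi> (w j) else 0)"
    "(\<integral>w. (if sampled Gam w j then \<phi> (w j) else 0) \<partial>S) = measure S {w\<in>space S. sampled Gam w j} * (\<integral>y. \<phi> y \<partial>M)"
proof -
  have sj: "(\<lambda>w. sampled Gam w j) \<in> measurable S (count_space UNIV)" using samp by blast
  have m: "(\<lambda>w. if sampled Gam w j then \<phi> (w j) else 0) \<in> borel_measurable S"
    using sj phi(1) by measurable
  have eq: "(\<integral>\<^sup>+w. ennreal (if sampled Gam w j then \<phi> (w j) else 0) \<partial>S) = (\<integral>\<^sup>+w. (if sampled Gam w j then ennreal (\<phi> (w j)) else 0) \<partial>S)"
    by (intro nn_integral_cong) simp
  have ip: "(\<integral>\<^sup>+y. ennreal (\<phi> y) \<partial>M) = ennreal (\<integral>y. \<phi> y \<partial>M)"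
    using phi by (intro nn_integral_eq_integral) auto
  have w: "(\<integral>\<^sup>+w. ennreal (if sampled Gam w j then \<phi> (w j) else 0) \<partial>S)
        = ennreal (measure S {w\<in>space S. sampled Gam w j} * (\<integral>y. \<phi> y \<partial>M))"
  proof -
    have "(\<lambda>y. ennreal (\<phi> y)) \<in> borel_measurable M" using phi(1) by simp
    note W = wald_nn[OF samp this, of j]
    show ?thesis unfolding eq W ip P.emeasure_eq_measure
      by (simp add: ennreal_mult' integral_nonneg phi(2))
  qed
  show "integrable S (\<lambda>w. if sampled Gam w j then \<phi> (w j) else 0)"
    using m w phi(2) by (intro integrableI_nn_integral_finite) auto
  show "(\<integral>w. (if sampled Gam w j then \<phi> (w j) else 0) \<partial>S) = measure S {w\<in>space S. sampled Gam w j} * (\<integral>y. \<phi> y \<partial>M)"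
    using m phi(2) by (subst integral_eq_nn_integral) (auto simp: w integral_nonneg)
qed

lemma (in sequence_space) wald_real:
  assumes samp: "\<forall>j. (\<lambda>w. sampled Gam w j) \<in> measurable S (count_space UNIV)"
    and phi: "integrable M \<phi>"
  shows "integrable S (\<lambda>w. if sampled Gam w j then \<phi> (w j) else 0)"
    "(\<integral>w. (if sampled Gam w j then \<phi> (w j) else 0) \<partial>S) = measure S {w\<in>space S. sampled Gam w j} * (\<integral>y. \<phi> y \<partial>M)"
proof -
  define p where "p y = max (\<phi> y) 0" for y
  define n where "n y = max (- \<phi> y) 0" for y
  have pm: "p \<in> borel_measurable M" "n \<in> borel_measurable M" using phi unfolding p_def n_def by auto
  have pi: "integrable M p" "integrable M n" using phi unfolding p_def n_def by auto
  have dec: "(\<lambda>w. if sampled Gam w j then \<phi> (w j) else 0) = (\<lambda>w. (if sampled Gam w j then p (w j) else 0) - (if sampled Gam w j then n (w j) else 0))"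
    by (auto simp: p_def n_def fun_eq_iff max_def)
  have phid: "(\<integral>y. \<phi> y \<partial>M) = (\<integral>y. p y \<partial>M) - (\<integral>y. n y \<partial>M)"
  proof -
    have "\<phi> = (\<lambda>y. p y - n y)" by (auto simp: p_def n_def fun_eq_iff max_def)
    thus ?thesis using pi by simp
  qed
  note A = wald_real_nonneg[OF samp pm(1) _ pi(1), of j] wald_real_nonneg[OF samp pm(2) _ pi(2), of j]
  have nn: "0 \<le> p y" "0 \<le> n y" for y by (auto simp: p_def n_def)
  show "integrable S (\<lambda>w. if sampled Gam w j then \<phi> (w j) else 0)"
    unfolding dec using A nn by auto
  show "(\<integral>w. (if sampled Gam w j then \<phi> (w j) else 0) \<partial>S) = measure S {w\<in>space S. sampled Gam w j} * (\<integral>y. \<phi> y \<partial>M)"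
    unfolding dec phid using A nn by (simp add: right_diff_distrib)
qed



lemma num_samples_sum:
  "num_samples Gam w = (\<Sum>j. indicator {w. sampled Gam w j} w)"
  unfolding num_samples_def by (intro suminf_cong) (simp add: indicator_def)

lemma fin_samples:
  assumes "num_samples Gam w \<noteq> \<infinity>"
  shows "\<exists>T. \<forall>j\<ge>T. \<not> sampled Gam w j"
proof (rule ccontr)
  assume "\<not> (\<exists>T. \<forall>j\<ge>T. \<not> sampled Gam w j)"
  hence inf: "infinite {j. sampled Gam w j}"
    using infinite_nat_iff_unbounded_le by auto
  have "num_samples Gam w = (\<integral>\<^sup>+j. indicator {j. sampled Gam w j} j \<partial>count_space UNIV)"
    unfolding num_samples_def nn_integral_count_space_nat by (intro suminf_cong) (simp add: indicator_def)
  also have "\<dots> = emeasure (count_space UNIV) {j. sampled Gam w j}" by simp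
  also have "\<dots> = \<infinity>" using inf by (simp add: emeasure_count_space)
  finally show False using assms by simp
qed

lemma num_samples_meas:
  assumes "\<And>j. (\<lambda>w. sampled Gam w j) \<in> measurable M (count_space UNIV)"
  shows "num_samples Gam \<in> borel_measurable M"
proof -
  have "(\<lambda>w. \<Sum>j. (if sampled Gam w j then 1 else 0 :: ennreal)) \<in> borel_measurable M"
    using assms by measurable
  thus ?thesis unfolding num_samples_def[abs_def] .
qed

lemma exp_ineq: "0 < t \<Longrightarrow> 1 - ln t - exp (- l) / t \<le> (l::real)"
proof -
  assume t: "0 < t"
  have "ln (exp (- l) / t) \<le> exp (- l) / t - 1" using t by (intro ln_le_minus_one) auto
  also have "ln (exp (- l) / t) = - l - ln t" using t by (simp add: ln_div)
  finally show ?thesis by simp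
qed


lemma coord:
  fixes P Q :: "'y measure" and L :: "'y \<Rightarrow> real"
  assumes P: "prob_space P" and Q: "prob_space Q" and sQ: "sets Q = sets P"
    and L: "L \<in> borel_measurable P"
    and chg: "\<And>h. h \<in> borel_measurable P \<Longrightarrow> (\<integral>\<^sup>+y. h y \<partial>Q) = (\<integral>\<^sup>+y. ennreal (exp (- L y)) * h y \<partial>P)"
    and Lint: "integrable P L"
    and samp: "\<forall>j. (\<lambda>w. sampled Gam w j) \<in> measurable (PiM UNIV (\<lambda>_. P)) (count_space UNIV)"
    and decm: "(\<lambda>w. dec (observed Gam w)) \<in> measurable (PiM UNIV (\<lambda>_. P)) (count_space UNIV)"
    and fin: "(\<integral>\<^sup>+w. num_samples Gam w \<partial>PiM UNIV (\<lambda>_. P)) \<noteq> \<infinity>"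
    and Dm: "0 \<le> Dm" "(\<integral>y. L y \<partial>P) \<le> Dm"
    and t: "0 < t" "t \<le> 1"
  shows "measure (PiM UNIV (\<lambda>_. Q)) {w \<in> space (PiM UNIV (\<lambda>_. Q)). dec (observed Gam w) = b} * (1 - 1/t)
         - measure (PiM UNIV (\<lambda>_. P)) {w \<in> space (PiM UNIV (\<lambda>_. P)). dec (observed Gam w) = b} * ln t
         \<le> enn2real (\<integral>\<^sup>+w. num_samples Gam w \<partial>PiM UNIV (\<lambda>_. P)) * Dm"
proof -
  interpret SP: sequence_space P by (rule seq_space[OF P])
  interpret SQ: sequence_space Q by (rule seq_space[OF Q])
  let ?SP = "PiM (UNIV::nat set) (\<lambda>_. P)" and ?SQ = "PiM (UNIV::nat set) (\<lambda>_. Q)"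
  have sS: "sets ?SQ = sets ?SP"
    by (rule sets_PiM_cong) (auto simp: sQ)
  have spS: "space ?SQ = space ?SP"
    using sets_eq_imp_space_eq[OF sS] .
  have sampm[measurable]: "(\<lambda>w. sampled Gam w j) \<in> measurable ?SP (count_space UNIV)" for j
    using samp by blast
  note decm[measurable]
  define a where "a = enn2real (\<integral>\<^sup>+w. num_samples Gam w \<partial>?SP)"
  define C where "C = {w \<in> space ?SP. dec (observed Gam w) = b}"
  have Cm: "C \<in> sets ?SP" unfolding C_def by measurable
  define B where "B T = {w \<in> space ?SP. dec (observed Gam w) = b \<and> (\<forall>j. T \<le> j \<longrightarrow> \<not> sampled Gam w j)}" for T
  have Bm: "B T \<in> sets ?SP" for T unfolding B_def by measurable
  have BC: "B T \<subseteq> C" for T unfolding B_def C_def by auto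
  have a_ge: "(\<Sum>j<T. measure ?SP {w\<in>space ?SP. sampled Gam w j}) \<le> a" for T
  proof -
    have Sm: "{w\<in>space ?SP. sampled Gam w j} \<in> sets ?SP" for j by measurable
    have "(\<integral>\<^sup>+w. num_samples Gam w \<partial>?SP) = (\<integral>\<^sup>+w. (\<Sum>j. indicator {w\<in>space ?SP. sampled Gam w j} w) \<partial>?SP)"
      by (intro nn_integral_cong) (simp add: num_samples_sum indicator_def)
    also have "\<dots> = (\<Sum>j. emeasure ?SP {w\<in>space ?SP. sampled Gam w j})"
      using Sm by (subst nn_integral_suminf) auto
    finally have tot: "(\<integral>\<^sup>+w. num_samples Gam w \<partial>?SP) = (\<Sum>j. emeasure ?SP {w\<in>space ?SP. sampled Gam w j})" .
    have "(\<Sum>j<T. emeasure ?SP {w\<in>space ?SP. sampled Gam w j}) \<le> (\<Sum>j. emeasure ?SP {w\<in>space ?SP. sampled Gam w j})"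
      by (intro sum_le_suminf) (auto intro: summableI)
    hence "ennreal (\<Sum>j<T. measure ?SP {w\<in>space ?SP. sampled Gam w j}) \<le> (\<integral>\<^sup>+w. num_samples Gam w \<partial>?SP)"
      unfolding tot by (simp add: SP.P.emeasure_eq_measure sum_ennreal)
    hence "enn2real (ennreal (\<Sum>j<T. measure ?SP {w\<in>space ?SP. sampled Gam w j})) \<le> a"
      unfolding a_def using fin by (intro enn2real_mono) (auto simp: less_top)
    thus ?thesis by (simp add: sum_nonneg)
  qed
  have main_T: "measure ?SQ (B T) * (1 - 1/t) - measure ?SP (B T) * ln t \<le> a * Dm" for T
  proof -
    define E where "E w = exp (- llr L Gam T w)" for w
    define IB where "IB w = (indicator (B T) w :: real)" for w
    define G where "G w = (if dec (observed Gam w) = b \<and> (\<forall>j. T \<le> j \<longrightarrow> \<not> sampled Gam w j) then 1 else 0 :: ennreal)" for w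
    have llrm[measurable]: "llr L Gam T \<in> borel_measurable ?SP" by (rule llr_meas[OF samp L])
    have Em[measurable]: "E \<in> borel_measurable ?SP" unfolding E_def by measurable
    have IBm[measurable]: "IB \<in> borel_measurable ?SP" unfolding IB_def using Bm by measurable
    have Gm: "G \<in> borel_measurable ?SP" unfolding G_def by measurable
    have Gdep: "\<forall>w w'. obs_prefix Gam w T = obs_prefix Gam w' T \<longrightarrow> G w = G w'"
    proof (intro allI impI)
      fix w w' assume eq: "obs_prefix Gam w T = obs_prefix Gam w' T"
      have "(dec (observed Gam w) = b \<and> (\<forall>j. T \<le> j \<longrightarrow> \<not> sampled Gam w j)) \<longleftrightarrow>
            (dec (observed Gam w') = b \<and> (\<forall>j. T \<le> j \<longrightarrow> \<not> sampled Gam w' j))"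
        using prefix_determines[OF eq] prefix_determines[OF eq[symmetric]] by auto
      thus "G w = G w'" unfolding G_def by simp
    qed
    have cm1: "(\<integral>\<^sup>+w. G w \<partial>?SQ) = (\<integral>\<^sup>+w. G w * ennreal (E w) \<partial>?SP)"
      using change_of_measure[OF P Q sQ L chg samp Gm Gdep] unfolding E_def .
    have cm2: "(\<integral>\<^sup>+w. 1 \<partial>?SQ) = (\<integral>\<^sup>+w. 1 * ennreal (E w) \<partial>?SP)"
      using change_of_measure[OF P Q sQ L chg samp, of "\<lambda>_. 1" T] unfolding E_def by simp
    have E1: "(\<integral>\<^sup>+w. ennreal (E w) \<partial>?SP) = ennreal 1"
      using cm2 by (simp add: SQ.P.emeasure_space_1)
    have Enn: "0 \<le> E w" for w unfolding E_def by simp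
    have Eint: "integrable ?SP E"
      using E1 Enn by (intro integrableI_nn_integral_finite) auto
    have Eint1: "(\<integral>w. E w \<partial>?SP) = 1"
      using E1 Enn by (subst integral_eq_nn_integral) auto
    have GB: "(\<integral>\<^sup>+w. G w \<partial>?SQ) = emeasure ?SQ (B T)"
    proof -
      have "(\<integral>\<^sup>+w. G w \<partial>?SQ) = (\<integral>\<^sup>+w. indicator (B T) w \<partial>?SQ)"
        by (intro nn_integral_cong) (auto simp: G_def B_def spS indicator_def)
      also have "\<dots> = emeasure ?SQ (B T)" using Bm sS by simp
      finally show ?thesis .
    qed
    have EIB: "(\<integral>\<^sup>+w. ennreal (E w * IB w) \<partial>?SP) = ennreal (measure ?SQ (B T))"
    proof -
      have "(\<integral>\<^sup>+w. ennreal (E w * IB w) \<partial>?SP) = (\<integral>\<^sup>+w. G w * ennreal (E w) \<partial>?SP)"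
        by (intro nn_integral_cong) (auto simp: G_def B_def IB_def indicator_def)
      also have "\<dots> = ennreal (measure ?SQ (B T))"
        unfolding cm1[symmetric] GB by (simp add: SQ.P.emeasure_eq_measure)
      finally show ?thesis .
    qed
    have IBnn: "0 \<le> IB w" "IB w \<le> 1" for w unfolding IB_def by (auto simp: indicator_def)
    have EIBint: "integrable ?SP (\<lambda>w. E w * IB w)"
      using EIB Enn IBnn by (intro integrableI_nn_integral_finite) auto
    have EIBv: "(\<integral>w. E w * IB w \<partial>?SP) = measure ?SQ (B T)"
      using EIB Enn IBnn by (subst integral_eq_nn_integral) auto
    have IBint: "integrable ?SP IB" unfolding IB_def using Bm by (intro integrable_real_indicator) (auto simp: less_top[symmetric])
    have IBv: "(\<integral>w. IB w \<partial>?SP) = measure ?SP (B T)" unfolding IB_def using Bm by simp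
    define h where "h j w = (if sampled Gam w j then L (w j) else 0)" for j w
    have llr_eq: "llr L Gam T = (\<lambda>w. \<Sum>j<T. h j w)" unfolding llr_def h_def by auto
    have hint: "integrable ?SP (h j)" for j unfolding h_def by (rule SP.wald_real(1)[OF samp Lint])
    have hv: "(\<integral>w. h j w \<partial>?SP) = measure ?SP {w\<in>space ?SP. sampled Gam w j} * (\<integral>y. L y \<partial>P)" for j
      unfolding h_def by (rule SP.wald_real(2)[OF samp Lint])
    have llr_int: "integrable ?SP (llr L Gam T)" unfolding llr_eq using hint by auto
    have llr_v: "(\<integral>w. llr L Gam T w \<partial>?SP) = (\<Sum>j<T. measure ?SP {w\<in>space ?SP. sampled Gam w j}) * (\<integral>y. L y \<partial>P)"
      unfolding llr_eq using hint by (simp add: hv sum_distrib_right)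
    have llr_le: "(\<integral>w. llr L Gam T w \<partial>?SP) \<le> a * Dm"
    proof (cases "0 \<le> (\<integral>y. L y \<partial>P)")
      case True
      have "(\<Sum>j<T. measure ?SP {w\<in>space ?SP. sampled Gam w j}) * (\<integral>y. L y \<partial>P) \<le> a * (\<integral>y. L y \<partial>P)"
        using a_ge True by (intro mult_right_mono) auto
      also have "\<dots> \<le> a * Dm" using Dm(2) by (intro mult_left_mono) (auto simp: a_def)
      finally show ?thesis unfolding llr_v .
    next
      case False
      have "(\<Sum>j<T. measure ?SP {w\<in>space ?SP. sampled Gam w j}) * (\<integral>y. L y \<partial>P) \<le> 0"
        using False by (intro mult_nonneg_nonpos) (auto intro: sum_nonneg)
      also have "0 \<le> a * Dm" using Dm(1) by (auto simp: a_def)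
      finally show ?thesis unfolding llr_v .
    qed
    define R where "R w = 1 - ln t * IB w - E w + (1 - 1/t) * (E w * IB w)" for w
    have R_le: "R w \<le> llr L Gam T w" for w
    proof (cases "w \<in> B T")
      case True
      hence "R w = 1 - ln t - E w / t" unfolding R_def IB_def by (simp add: field_simps)
      thus ?thesis using exp_ineq[OF t(1), of "llr L Gam T w"] unfolding E_def by simp
    next
      case False
      hence "R w = 1 - ln 1 - E w / 1" unfolding R_def IB_def by simp
      thus ?thesis using exp_ineq[of 1 "llr L Gam T w"] unfolding E_def by simp
    qed
    have Rint: "integrable ?SP R" unfolding R_def using Eint IBint EIBint by auto
    have Rv: "(\<integral>w. R w \<partial>?SP) = measure ?SQ (B T) * (1 - 1/t) - measure ?SP (B T) * ln t"
      unfolding R_def using Eint IBint EIBint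
      by (simp add: Eint1 IBv EIBv SP.P.prob_space algebra_simps)
    have "(\<integral>w. R w \<partial>?SP) \<le> (\<integral>w. llr L Gam T w \<partial>?SP)"
      using Rint llr_int R_le by (intro integral_mono) auto
    thus ?thesis using Rv llr_le by linarith
  qed
  have step: "measure ?SQ C * (1 - 1/t) - measure ?SP (B T) * ln t \<le> a * Dm" for T
  proof -
    have "measure ?SQ (B T) \<le> measure ?SQ C"
      using BC Cm sS by (intro SQ.P.finite_measure_mono) auto
    moreover have "1 - 1/t \<le> 0" using t by (simp add: field_simps)
    ultimately have "measure ?SQ C * (1 - 1/t) \<le> measure ?SQ (B T) * (1 - 1/t)"
      by (intro mult_right_mono_neg) auto
    thus ?thesis using main_T[of T] by linarith
  qed
  have incB: "incseq B" unfolding B_def incseq_def by auto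
  have lim: "(\<lambda>T. measure ?SP (B T)) \<longlonglongrightarrow> measure ?SP (\<Union>T. B T)"
    using Bm incB by (intro SP.P.finite_Lim_measure_incseq) auto
  have UC: "measure ?SP (\<Union>T. B T) = measure ?SP C"
  proof (rule measure_eq_AE)
    have nm: "num_samples Gam \<in> borel_measurable ?SP" by (intro num_samples_meas) simp
    have "AE w in ?SP. num_samples Gam w \<noteq> \<infinity>"
      using nm fin by (intro nn_integral_PInf_AE) auto
    thus "AE w in ?SP. w \<in> (\<Union>T. B T) \<longleftrightarrow> w \<in> C"
    proof (rule AE_mp, intro AE_I2 impI)
      fix w assume "w \<in> space ?SP" "num_samples Gam w \<noteq> \<infinity>"
      thus "w \<in> (\<Union>T. B T) \<longleftrightarrow> w \<in> C"
        using fin_samples[of Gam w] unfolding B_def C_def by auto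
    qed
    show "(\<Union>T. B T) \<in> sets ?SP" using Bm by auto
    show "C \<in> sets ?SP" by (rule Cm)
  qed
  have "(\<lambda>T. measure ?SQ C * (1 - 1/t) - measure ?SP (B T) * ln t) \<longlonglongrightarrow> measure ?SQ C * (1 - 1/t) - measure ?SP C * ln t"
    using lim unfolding UC by (intro tendsto_intros)
  hence "measure ?SQ C * (1 - 1/t) - measure ?SP C * ln t \<le> a * Dm"
    by (rule LIMSEQ_le_const2) (use step in blast)
  moreover have "C = {w \<in> space ?SQ. dec (observed Gam w) = b}" unfolding C_def spS ..
  ultimately show ?thesis unfolding C_def a_def by simp
qed



lemma ln_half_bound: "0 < (y::real) \<Longrightarrow> ln y \<le> y / 2"
proof -
  assume y: "0 < y"
  have "ln (y/2) \<le> y/2 - 1" using y by (intro ln_le_minus_one) auto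
  moreover have "ln (y/2) = ln y - ln 2" using y by (simp add: ln_div)
  moreover have "ln (2::real) < 1" using ln_2_less_1 .
  ultimately show ?thesis by linarith
qed

lemma one_minus_le_exp: "1 - (x::real) \<le> exp (- x)"
  using exp_ge_add_one_self[of "-x"] by simp

lemma final_real:
  fixes n s k :: nat and p0 q1 a0 a1 D m \<delta> :: real
  assumes k: "k = n - s" and n2: "n \<ge> 2" and s1: "1 \<le> s" and sh: "real s \<le> real n / 2"
    and dp: "\<delta> > 0" and Dp: "D > 0" and m0: "m \<ge> 0"
    and mb: "m \<le> (ln (real s) + ln (1 / (4 * \<delta>))) / D"
    and p0: "0 \<le> p0" "p0 \<le> 1" and q1: "0 \<le> q1" "q1 \<le> 1"
    and a: "0 \<le> a0" "0 \<le> a1" "real k * a0 + real s * a1 \<le> real n * m"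
    and c0: "\<And>t. 0 < t \<Longrightarrow> t \<le> 1 \<Longrightarrow> (1 - q1) * (1 - 1/t) - p0 * ln t \<le> a0 * D"
    and c1: "\<And>t. 0 < t \<Longrightarrow> t \<le> 1 \<Longrightarrow> (1 - p0) * (1 - 1/t) - q1 * ln t \<le> a1 * D"
  shows "1 - p0 ^ k * q1 ^ s \<ge> 1 - exp (- \<delta>)"
proof (rule ccontr)
  assume "\<not> ?thesis"
  hence big: "p0 ^ k * q1 ^ s > exp (- \<delta>)" by simp
  have sr: "real s \<ge> 1" using s1 by simp
  have kr: "real k = real n - real s" using k sh by (simp add: of_nat_diff)
  have ks: "real s \<le> real k" using kr sh by simp
  define X where "X = ln (real s) + ln (1 / (4 * \<delta>))"
  have X0: "0 \<le> X"
  proof -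
    have "0 \<le> m * D" using m0 Dp by simp
    also have "m * D \<le> X" using mb Dp unfolding X_def by (simp add: field_simps)
    finally show ?thesis .
  qed
  have Xe: "X = ln (real s / \<delta>) - ln 4"
    unfolding X_def using dp sr by (simp add: ln_div ln_mult)
  define Lg where "Lg = ln (real s / \<delta>)"
  have ln4: "ln (4::real) = 2 * ln 2"
    using ln_realpow[of 2 2] by simp
  have ln2: "2/3 \<le> ln (2::real)" by (rule ln2_ge_two_thirds)
  have Lgpos: "Lg > 0" using X0 Xe ln4 ln2 unfolding Lg_def by linarith
  have d4: "4 * \<delta> \<le> real s"
  proof -
    have "ln 4 \<le> ln (real s / \<delta>)" using X0 Xe by simp
    hence "4 \<le> real s / \<delta>" using dp sr by (subst (asm) ln_le_cancel_iff) auto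
    thus ?thesis using dp by (simp add: field_simps)
  qed
  define al where "al = 1 - p0"
  define be where "be = 1 - q1"
  have sum_lt: "real k * al + real s * be < \<delta>"
  proof -
    have "p0 ^ k \<le> exp (- al) ^ k" unfolding al_def using p0 one_minus_le_exp[of "1 - p0"]
      by (intro power_mono) auto
    moreover have "q1 ^ s \<le> exp (- be) ^ s" unfolding be_def using q1 one_minus_le_exp[of "1 - q1"]
      by (intro power_mono) auto
    ultimately have "p0 ^ k * q1 ^ s \<le> exp (- al) ^ k * exp (- be) ^ s"
      using p0 q1 by (intro mult_mono) auto
    also have "\<dots> = exp (- (real k * al + real s * be))"
      by (simp add: exp_of_nat_mult[symmetric] exp_add[symmetric] algebra_simps)
    finally have "p0 ^ k * q1 ^ s \<le> exp (- (real k * al + real s * be))" .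
    hence "exp (- \<delta>) < exp (- (real k * al + real s * be))" using big by linarith
    thus ?thesis by simp
  qed
  have al0: "0 \<le> al" "0 \<le> be" unfolding al_def be_def using p0 q1 by auto
  have sbe: "real s * be < \<delta>" using sum_lt al0 by (smt (verit) mult_nonneg_nonneg of_nat_0_le_iff)
  have kal: "real k * al < \<delta>" using sum_lt al0 by (smt (verit) mult_nonneg_nonneg of_nat_0_le_iff)
  have t0: "0 < \<delta> / real s" "\<delta> / real s \<le> 1" using dp sr d4 by (auto simp: field_simps)
  have A0: "a0 * D > p0 * Lg - 1"
  proof -
    have "be * (1 - 1 / (\<delta> / real s)) - p0 * ln (\<delta> / real s) \<le> a0 * D"
      using c0[OF t0] unfolding be_def .
    moreover have "ln (\<delta> / real s) = - Lg" unfolding Lg_def using dp sr by (simp add: ln_div)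
    moreover have "be * (1 - 1 / (\<delta> / real s)) > -1"
    proof -
      have "be * real s / \<delta> < 1" using sbe dp by (simp add: field_simps)
      moreover have "be * (1 - 1 / (\<delta> / real s)) = be - be * real s / \<delta>" using dp by (simp add: field_simps)
      ultimately show ?thesis using al0 by linarith
    qed
    ultimately show ?thesis by simp
  qed
  have kpos: "real k \<ge> 1" using ks sr by simp
  have t1: "0 < \<delta> / real k" "\<delta> / real k \<le> 1" using dp kpos d4 ks by (auto simp: field_simps)
  have A1: "a1 * D > q1 * Lg - 1"
  proof -
    have "al * (1 - 1 / (\<delta> / real k)) - q1 * ln (\<delta> / real k) \<le> a1 * D"
      using c1[OF t1] unfolding al_def .
    moreover have "ln (\<delta> / real k) \<le> - Lg" unfolding Lg_def using dp sr ks by (simp add: ln_div)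
    moreover have "al * (1 - 1 / (\<delta> / real k)) > -1"
    proof -
      have "al * real k / \<delta> < 1" using kal dp by (simp add: field_simps)
      moreover have "al * (1 - 1 / (\<delta> / real k)) = al - al * real k / \<delta>" using dp by (simp add: field_simps)
      ultimately show ?thesis using al0 by linarith
    qed
    moreover have "q1 * ln (\<delta> / real k) \<le> q1 * (- Lg)"
      using q1 \<open>ln (\<delta> / real k) \<le> - Lg\<close> by (intro mult_left_mono) auto
    ultimately show ?thesis by linarith
  qed
  have "(real n - \<delta>) * Lg - real n \<le> (real n - real k * al - real s * be) * Lg - real n"
    using sum_lt Lgpos by (intro diff_right_mono mult_right_mono) auto
  also have "\<dots> = real k * (p0 * Lg - 1) + real s * (q1 * Lg - 1)"
    unfolding al_def be_def using kr by (simp add: algebra_simps)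
  also have "\<dots> < real k * (a0 * D) + real s * (a1 * D)"
    using A0 A1 kpos sr by (intro add_strict_mono mult_strict_left_mono) auto
  also have "\<dots> = (real k * a0 + real s * a1) * D" by (simp add: algebra_simps)
  also have "\<dots> \<le> real n * m * D" using a(3) Dp by (intro mult_right_mono) auto
  finally have lo: "real n * m * D > (real n - \<delta>) * Lg - real n" .
  have "real n * m * D \<le> real n * X"
  proof -
    have "m * D \<le> X" using mb Dp unfolding X_def by (simp add: field_simps)
    thus ?thesis using n2 by (simp add: mult.assoc mult_left_mono)
  qed
  hence hi: "real n * m * D \<le> real n * (Lg - 2 * ln 2)" using Xe ln4 unfolding Lg_def by simp
  have "\<delta> * Lg \<le> real s / 2"
  proof -
    have "Lg \<le> (real s / \<delta>) / 2" unfolding Lg_def using dp sr by (intro ln_half_bound) auto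
    hence "\<delta> * Lg \<le> \<delta> * ((real s / \<delta>) / 2)" using dp by (intro mult_left_mono) auto
    thus ?thesis using dp by simp
  qed
  moreover have "real n * (2 * ln 2 - 1) < \<delta> * Lg" using lo hi by (simp add: algebra_simps)
  moreover have "real n * (1/3) \<le> real n * (2 * ln 2 - 1)" using ln2 by (intro mult_left_mono) auto
  ultimately show False using sh n2 by simp
qed



lemma dens_chg:
  fixes mu :: "'y measure" and f g :: "'y \<Rightarrow> real"
  assumes fm: "f \<in> borel_measurable mu" and gm: "g \<in> borel_measurable mu"
    and fnn: "\<forall>y\<in>space mu. f y \<ge> 0" and gnn: "\<forall>y\<in>space mu. g y \<ge> 0"
    and cs: "\<forall>y\<in>space mu. f y > 0 \<longleftrightarrow> g y > 0"
    and h: "h \<in> borel_measurable (density mu f)"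
  shows "(\<integral>\<^sup>+y. h y \<partial>density mu g) = (\<integral>\<^sup>+y. ennreal (exp (- ln (f y / g y))) * h y \<partial>density mu f)"
proof -
  have hm: "h \<in> borel_measurable mu" using h unfolding measurable_cong_sets[OF sets_density refl] .
  have em: "(\<lambda>y. ennreal (exp (- ln (f y / g y)))) \<in> borel_measurable mu" using fm gm by measurable
  have "(\<integral>\<^sup>+y. h y \<partial>density mu g) = (\<integral>\<^sup>+y. ennreal (g y) * h y \<partial>mu)"
    using gm hm by (subst nn_integral_density) auto
  also have "\<dots> = (\<integral>\<^sup>+y. ennreal (f y) * (ennreal (exp (- ln (f y / g y))) * h y) \<partial>mu)"
  proof (intro nn_integral_cong)
    fix y assume y: "y \<in> space mu"
    have "ennreal (f y) * ennreal (exp (- ln (f y / g y))) = ennreal (g y)"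
    proof (cases "f y > 0")
      case True
      hence gp: "g y > 0" using cs y by auto
      have "exp (- ln (f y / g y)) = g y / f y"
        using True gp by (simp add: exp_diff ln_div)
      hence "f y * exp (- ln (f y / g y)) = g y" using True by simp
      thus ?thesis using True by (simp add: ennreal_mult[symmetric])
    next
      case False
      hence "f y = 0" using fnn y by (metis less_eq_real_def)
      moreover have "g y = 0" using False cs gnn y by (metis less_eq_real_def)
      ultimately show ?thesis by simp
    qed
    thus "ennreal (g y) * h y = ennreal (f y) * (ennreal (exp (- ln (f y / g y))) * h y)"
      by (metis mult.assoc)
  qed
  also have "\<dots> = (\<integral>\<^sup>+y. ennreal (exp (- ln (f y / g y))) * h y \<partial>density mu f)"
    using fm hm em by (subst nn_integral_density) auto
  finally show ?thesis .
qed

theorem theorem1: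
  fixes n s :: nat and S :: "nat set"
    and mu :: "'y measure" and f0 f1 :: "'y \<Rightarrow> real"
    and Gam :: "'y option list \<Rightarrow> bool" and dec :: "(nat \<Rightarrow> 'y option) \<Rightarrow> bool"
    and m \<delta> :: real
  assumes n2: "n \<ge> 2"
    and S_sub: "S \<subseteq> {1..n}" and S_card: "card S = s"
    and s_pos: "1 \<le> s" and s_half: "real s \<le> real n / 2"
    and f0_meas: "f0 \<in> borel_measurable mu" and f1_meas: "f1 \<in> borel_measurable mu"
    and f0_nn: "\<forall>y\<in>space mu. f0 y \<ge> 0" and f1_nn: "\<forall>y\<in>space mu. f1 y \<ge> 0"
    and P0_prob: "prob_space (density mu f0)" and P1_prob: "prob_space (density mu f1)"
    and common_support: "\<forall>y\<in>space mu. f0 y > 0 \<longleftrightarrow> f1 y > 0"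
    and P_ne: "density mu f0 \<noteq> density mu f1"
    and int01: "integrable (density mu f0) (\<lambda>y. ln (f0 y / f1 y))"
    and int10: "integrable (density mu f1) (\<lambda>y. ln (f1 y / f0 y))"
    and DKL_pos: "max (KL_dens mu f0 f1) (KL_dens mu f1 f0) > 0"
    and delta_pos: "\<delta> > 0"
    and Gam_meas: "\<forall>j. (\<lambda>w. sampled Gam w j)
                       \<in> measurable (PiM (UNIV :: nat set) (\<lambda>_. mu)) (count_space UNIV)"
    and dec_meas: "(\<lambda>w. dec (observed Gam w))
                       \<in> measurable (PiM (UNIV :: nat set) (\<lambda>_. mu)) (count_space UNIV)"
    and m_nonneg: "m \<ge> 0"
    and budget: "(\<integral>\<^sup>+ w. (\<Sum>i\<in>{1..n}. num_samples Gam (w i))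
                    \<partial>(sample_space n S (density mu f0) (density mu f1)))
                 \<le> ennreal (real n * m)"
    and m_bound: "m \<le> (ln (real s) + ln (1 / (4 * \<delta>)))
                        / max (KL_dens mu f0 f1) (KL_dens mu f1 f0)"
  shows "measure (sample_space n S (density mu f0) (density mu f1))
           {w \<in> space (sample_space n S (density mu f0) (density mu f1)).
              est_support n Gam dec w \<noteq> S}
         \<ge> 1 - exp (- \<delta>)"
proof -
  let ?P0 = "density mu f0" and ?P1 = "density mu f1"
  let ?S0 = "PiM (UNIV::nat set) (\<lambda>_. ?P0)" and ?S1 = "PiM (UNIV::nat set) (\<lambda>_. ?P1)"
  let ?SM = "PiM (UNIV::nat set) (\<lambda>_. mu)"
  define MM where "MM i = PiM (UNIV::nat set) (\<lambda>_. if i \<in> S then ?P1 else ?P0)" for i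
  have SSe: "sample_space n S ?P0 ?P1 = PiM {1..n} MM" unfolding sample_space_def MM_def ..
  have MMi: "MM i = (if i \<in> S then ?S1 else ?S0)" for i unfolding MM_def by auto
  define Dm where "Dm = max (KL_dens mu f0 f1) (KL_dens mu f1 f0)"
  have sS0: "sets ?S0 = sets ?SM" by (rule sets_PiM_cong) auto
  have sS1: "sets ?S1 = sets ?SM" by (rule sets_PiM_cong) auto
  have samp0: "\<forall>j. (\<lambda>w. sampled Gam w j) \<in> measurable ?S0 (count_space UNIV)"
    using Gam_meas unfolding measurable_cong_sets[OF sS0 refl] .
  have samp1: "\<forall>j. (\<lambda>w. sampled Gam w j) \<in> measurable ?S1 (count_space UNIV)"
    using Gam_meas unfolding measurable_cong_sets[OF sS1 refl] .
  have decm0: "(\<lambda>w. dec (observed Gam w)) \<in> measurable ?S0 (count_space UNIV)"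
    using dec_meas unfolding measurable_cong_sets[OF sS0 refl] .
  have decm1: "(\<lambda>w. dec (observed Gam w)) \<in> measurable ?S1 (count_space UNIV)"
    using dec_meas unfolding measurable_cong_sets[OF sS1 refl] .
  have PS0: "prob_space ?S0" by (rule prob_space_PiM) (rule P0_prob)
  have PS1: "prob_space ?S1" by (rule prob_space_PiM) (rule P1_prob)
  have PMM: "prob_space (MM i)" for i unfolding MMi using PS0 PS1 by auto
  have L0: "(\<lambda>y. ln (f0 y / f1 y)) \<in> borel_measurable ?P0"
    unfolding measurable_cong_sets[OF sets_density refl] using f0_meas f1_meas by measurable
  have L1: "(\<lambda>y. ln (f1 y / f0 y)) \<in> borel_measurable ?P1"
    unfolding measurable_cong_sets[OF sets_density refl] using f0_meas f1_meas by measurable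
  have chg0: "\<And>h. h \<in> borel_measurable ?P0 \<Longrightarrow> (\<integral>\<^sup>+y. h y \<partial>?P1) = (\<integral>\<^sup>+y. ennreal (exp (- ln (f0 y / f1 y))) * h y \<partial>?P0)"
    using dens_chg[OF f0_meas f1_meas f0_nn f1_nn common_support] .
  have cs': "\<forall>y\<in>space mu. f1 y > 0 \<longleftrightarrow> f0 y > 0" using common_support by auto
  have chg1: "\<And>h. h \<in> borel_measurable ?P1 \<Longrightarrow> (\<integral>\<^sup>+y. h y \<partial>?P0) = (\<integral>\<^sup>+y. ennreal (exp (- ln (f1 y / f0 y))) * h y \<partial>?P1)"
    using dens_chg[OF f1_meas f0_meas f1_nn f0_nn cs'] .
  have Dm0: "0 \<le> Dm" using DKL_pos unfolding Dm_def by simp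
  have D01: "(\<integral>y. ln (f0 y / f1 y) \<partial>?P0) \<le> Dm" unfolding Dm_def KL_dens_def by simp
  have D10: "(\<integral>y. ln (f1 y / f0 y) \<partial>?P1) \<le> Dm" unfolding Dm_def KL_dens_def by simp
  define a0 where "a0 = (\<integral>\<^sup>+w. num_samples Gam w \<partial>?S0)"
  define a1 where "a1 = (\<integral>\<^sup>+w. num_samples Gam w \<partial>?S1)"
  have nsm: "num_samples Gam \<in> borel_measurable (MM i)" for i
  proof (cases "i \<in> S")
    case True
    thus ?thesis unfolding MMi using samp1 by (simp add: num_samples_meas)
  next
    case False
    thus ?thesis unfolding MMi using samp0 by (simp add: num_samples_meas)
  qed
  have cardS: "card ({1..n} \<inter> {i. i \<in> S}) = s" using S_sub S_card by (simp add: Int_absorb1 Collect_mem_eq)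
  have cardNS: "card ({1..n} \<inter> - {i. i \<in> S}) = n - s"
  proof -
    have "{1..n} \<inter> - {i. i \<in> S} = {1..n} - S" by auto
    thus ?thesis using S_sub S_card by (simp add: card_Diff_subset finite_subset)
  qed
  have "(\<integral>\<^sup>+w. (\<Sum>i\<in>{1..n}. num_samples Gam (w i)) \<partial>PiM {1..n} MM)
      = (\<Sum>i\<in>{1..n}. \<integral>\<^sup>+w. num_samples Gam (w i) \<partial>PiM {1..n} MM)"
    using nsm by (intro nn_integral_sum) (auto intro: measurable_compose[OF measurable_component_singleton])
  also have "\<dots> = (\<Sum>i\<in>{1..n}. if i \<in> S then a1 else a0)"
  proof (intro sum.cong refl)
    fix i assume i: "i \<in> {1..n}"
    have "(\<integral>\<^sup>+w. num_samples Gam (w i) \<partial>PiM {1..n} MM) = (\<integral>\<^sup>+x. num_samples Gam x \<partial>distr (PiM {1..n} MM) (MM i) (\<lambda>w. w i))"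
      using i nsm[of i] by (subst nn_integral_distr) (auto intro: measurable_component_singleton)
    also have "\<dots> = (\<integral>\<^sup>+x. num_samples Gam x \<partial>MM i)"
      using i PMM by (subst distr_PiM_component) auto
    also have "\<dots> = (if i \<in> S then a1 else a0)" unfolding MMi a0_def a1_def by simp
    finally show "(\<integral>\<^sup>+w. num_samples Gam (w i) \<partial>PiM {1..n} MM) = (if i \<in> S then a1 else a0)" .
  qed
  also have "\<dots> = of_nat s * a1 + of_nat (n - s) * a0"
  proof -
    have c1: "card ({1..n} \<inter> S) = s" using cardS by (simp add: Collect_mem_eq)
    have c2: "card ({1..n} \<inter> - S) = n - s" using cardNS by (simp add: Collect_mem_eq)
    show ?thesis using c1 c2 by (simp add: sum.If_cases)
  qed
  finally have budget2: "of_nat s * a1 + of_nat (n - s) * a0 \<le> ennreal (real n * m)"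
    using budget unfolding SSe by simp
  have ns: "1 \<le> n - s" using s_half s_pos by linarith
  have a0fin: "a0 \<noteq> \<infinity>"
  proof
    assume "a0 = \<infinity>"
    hence "of_nat (n - s) * a0 = \<infinity>" using ns by (simp add: ennreal_mult_eq_top_iff)
    hence "of_nat s * a1 + of_nat (n - s) * a0 = \<infinity>" by simp
    hence "(\<infinity>::ennreal) \<le> ennreal (real n * m)" using budget2 by metis
    thus False by (simp add: top_unique)
  qed
  have a1fin: "a1 \<noteq> \<infinity>"
  proof
    assume "a1 = \<infinity>"
    hence "of_nat s * a1 = \<infinity>" using s_pos by (simp add: ennreal_mult_eq_top_iff)
    hence "of_nat s * a1 + of_nat (n - s) * a0 = \<infinity>" by simp
    hence "(\<infinity>::ennreal) \<le> ennreal (real n * m)" using budget2 by metis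
    thus False by (simp add: top_unique)
  qed
  define a0r where "a0r = enn2real a0"
  define a1r where "a1r = enn2real a1"
  have a0e: "a0 = ennreal a0r" unfolding a0r_def using a0fin by (simp add: less_top)
  have a1e: "a1 = ennreal a1r" unfolding a1r_def using a1fin by (simp add: less_top)
  have ar: "0 \<le> a0r" "0 \<le> a1r" unfolding a0r_def a1r_def by auto
  have budr: "real (n - s) * a0r + real s * a1r \<le> real n * m"
  proof -
    have "ennreal (real s * a1r + real (n - s) * a0r) = of_nat s * a1 + of_nat (n - s) * a0"
      unfolding a0e a1e using ar by (simp add: ennreal_mult' ennreal_plus[symmetric] ennreal_of_nat_eq_real_of_nat)
    hence "ennreal (real s * a1r + real (n - s) * a0r) \<le> ennreal (real n * m)" using budget2 by simp
    thus ?thesis using m_nonneg by (simp add: ennreal_le_iff algebra_simps)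
  qed
  define p0 where "p0 = measure ?S0 {w \<in> space ?S0. dec (observed Gam w) = False}"
  define q1 where "q1 = measure ?S1 {w \<in> space ?S1. dec (observed Gam w) = True}"
  have ev0: "{w \<in> space ?S0. dec (observed Gam w) = b} \<in> sets ?S0" for b using decm0 by measurable
  have ev1: "{w \<in> space ?S1. dec (observed Gam w) = b} \<in> sets ?S1" for b using decm1 by measurable
  have cmp0: "measure ?S0 {w \<in> space ?S0. dec (observed Gam w) = True} = 1 - p0"
  proof -
    have "{w \<in> space ?S0. dec (observed Gam w) = True} = space ?S0 - {w \<in> space ?S0. dec (observed Gam w) = False}"
      by auto
    thus ?thesis unfolding p0_def using prob_space.prob_compl[OF PS0 ev0[of False]] by simp
  qed
  have cmp1: "measure ?S1 {w \<in> space ?S1. dec (observed Gam w) = False} = 1 - q1"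
  proof -
    have "{w \<in> space ?S1. dec (observed Gam w) = False} = space ?S1 - {w \<in> space ?S1. dec (observed Gam w) = True}"
      by auto
    thus ?thesis unfolding q1_def using prob_space.prob_compl[OF PS1 ev1[of True]] by simp
  qed
  have sQ0: "sets ?P1 = sets ?P0" by simp
  have sQ1: "sets ?P0 = sets ?P1" by simp
  have c0: "(1 - q1) * (1 - 1/t) - p0 * ln t \<le> a0r * Dm" if "0 < t" "t \<le> 1" for t
    using coord[OF P0_prob P1_prob sQ0 L0 chg0 int01 samp0 decm0 a0fin[unfolded a0_def] Dm0 D01 that, where b=False]
    unfolding cmp1 p0_def[symmetric] a0r_def a0_def .
  have c1: "(1 - p0) * (1 - 1/t) - q1 * ln t \<le> a1r * Dm" if "0 < t" "t \<le> 1" for t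
    using coord[OF P1_prob P0_prob sQ1 L1 chg1 int10 samp1 decm1 a1fin[unfolded a1_def] Dm0 D10 that, where b=True]
    unfolding cmp0 q1_def[symmetric] a1r_def a1_def .
  have pq: "0 \<le> p0" "p0 \<le> 1" "0 \<le> q1" "q1 \<le> 1" unfolding p0_def q1_def
    using prob_space.prob_le_1[OF PS0] prob_space.prob_le_1[OF PS1] by auto
  have err: "measure (sample_space n S ?P0 ?P1) {w \<in> space (sample_space n S ?P0 ?P1). est_support n Gam dec w \<noteq> S}
      = 1 - p0 ^ (n - s) * q1 ^ s"
  proof -
    interpret FP: finite_product_prob_space MM "{1..n}"
      by (intro finite_product_prob_space.intro finite_product_sigma_finite.intro product_prob_space.intro
          product_sigma_finite.intro product_prob_space_axioms.intro finite_product_sigma_finite_axioms.intro)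
         (auto simp: PMM prob_space_imp_sigma_finite)
    define A where "A i = {x \<in> space (MM i). dec (observed Gam x) = (i \<in> S)}" for i
    have Am: "A i \<in> sets (MM i)" for i
    proof (cases "i \<in> S")
      case True thus ?thesis unfolding A_def MMi using ev1[of True] by simp
    next
      case False thus ?thesis unfolding A_def MMi using ev0[of False] by simp
    qed
    have Cm: "PiE {1..n} A \<in> sets (PiM {1..n} MM)" using Am by (intro sets_PiM_I_finite) auto
    have set_eq: "{w \<in> space (PiM {1..n} MM). est_support n Gam dec w \<noteq> S} = space (PiM {1..n} MM) - PiE {1..n} A"
    proof (intro set_eqI iffI)
      fix w assume "w \<in> {w \<in> space (PiM {1..n} MM). est_support n Gam dec w \<noteq> S}"
      hence w: "w \<in> space (PiM {1..n} MM)" and ne: "est_support n Gam dec w \<noteq> S" by auto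
      have "w \<notin> PiE {1..n} A"
      proof
        assume "w \<in> PiE {1..n} A"
        hence "\<forall>i\<in>{1..n}. dec (observed Gam (w i)) = (i \<in> S)" unfolding A_def by auto
        hence "est_support n Gam dec w = S" unfolding est_support_def using S_sub by auto
        thus False using ne by simp
      qed
      thus "w \<in> space (PiM {1..n} MM) - PiE {1..n} A" using w by simp
    next
      fix w assume "w \<in> space (PiM {1..n} MM) - PiE {1..n} A"
      hence w: "w \<in> space (PiM {1..n} MM)" and nA: "w \<notin> PiE {1..n} A" by auto
      have "est_support n Gam dec w \<noteq> S"
      proof
        assume eq: "est_support n Gam dec w = S"
        have "\<forall>i\<in>{1..n}. dec (observed Gam (w i)) = (i \<in> S)"
          using eq S_sub unfolding est_support_def by auto
        hence "w \<in> PiE {1..n} A" using w unfolding A_def by (auto simp: space_PiM PiE_iff)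
        thus False using nA by simp
      qed
      thus "w \<in> {w \<in> space (PiM {1..n} MM). est_support n Gam dec w \<noteq> S}" using w by simp
    qed
    have "measure (PiM {1..n} MM) (PiE {1..n} A) = (\<Prod>i\<in>{1..n}. measure (MM i) (A i))"
      using Am by (intro FP.finite_measure_PiM_emb) auto
    also have "\<dots> = (\<Prod>i\<in>{1..n}. if i \<in> S then q1 else p0)"
      by (intro prod.cong refl) (auto simp: A_def MMi p0_def q1_def)
    also have "\<dots> = q1 ^ s * p0 ^ (n - s)"
    proof -
      have c1: "card ({1..n} \<inter> S) = s" using cardS by (simp add: Collect_mem_eq)
      have c2: "card ({1..n} \<inter> - S) = n - s" using cardNS by (simp add: Collect_mem_eq)
      show ?thesis using c1 c2 by (simp add: prod.If_cases)
    qed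
    finally have mC: "measure (PiM {1..n} MM) (PiE {1..n} A) = q1 ^ s * p0 ^ (n - s)" .
    show ?thesis unfolding SSe set_eq using FP.prob_compl[OF Cm] mC by simp
  qed
  have Dpos: "Dm > 0" using DKL_pos unfolding Dm_def .
  have "1 - p0 ^ (n - s) * q1 ^ s \<ge> 1 - exp (- \<delta>)"
    by (rule final_real[OF refl n2 s_pos s_half delta_pos Dpos m_nonneg _ pq ar budr c0 c1])
       (use m_bound in \<open>simp add: Dm_def\<close>)
  thus ?thesis using err by simp
qed


end
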